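(* Let $i$ be a positive integer and let $C$ be an $\mathbb{F}$-linear $[n,k,d]$-code with ordered basis $B$. (a) ${\sf Code}(B,i)$ is an $\mathbb{F}$-linear $[n_i,k_i,d_i]$-code with \[ n_i=n\prod_{j=1}^{i}(k+j),\qquad k_i=k+i,\qquad d_i\ge d\prod_{j=1}^{i}(k+j-1). \] (b) Suppose that $C$ is $u$-bounded relative to $B$ for a positive integer $u$ satisfying $u\ge d(1+ik^{-1})$. Then \[ d_i=d\prod_{j=1}^{i}(k+j). \] Moreover, setting $u_i=u\prod_{j=1}^{i}(k+j-1)$, the code ${\sf Code}(B,i)$ is $u_i$-bounded relative to ${\sf Basis}(B,i)$ if and only if $u\ge d(1+(i+1)k^{-1})$.
   Context: $\mathbb{F}$ is an arbitrary field and vectors in $\mathbb{F}^n$ are column vectors. The weight $\mathrm{wt}(x)$ of $x\in\mathbb{F}^n$ is its number of nonzero coordinates. An $[n,k,d]$-code is a $k$-dimensional subspace of $\mathbb{F}^n$ whose minimum distance (the minimum weight of a nonzero codeword) is $d$. Boundedness: let $u$ be a positive integer and let $C$ be an $[n,k,d]$-code with ordered basis $B=(a_1,\dots,a_k)$. Then $C$ is $u$-bounded relative to $B$ if all three of the following hold: (i) $\mathrm{wt}(a_j)=u$ for every $j$; (ii) $\mathrm{wt}\big(\sum_{j=1}^k a_j\big)=d$; (iii) $u\ge d(1+k^{-1})$. Construction: for an ordered basis $B=(a_1,\dots,a_k)$ of a code $C\le\mathbb{F}^n$, set $a_0:=0\in\mathbb{F}^n$. For $m=1,\dots,k+1$,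 let $a'_m\in\mathbb{F}^{n(k+1)}$ be the column vector made of $k+1$ blocks of length $n$. Its $r$-th block, for $r=1,\dots,k+1$, is $a_{r-m}$, where the subscript is read modulo $k+1$ with representatives in $\{0,\dots,k\}$. Thus $a'_1=(0,a_1,\dots,a_k)^T$, $a'_2=(a_k,0,a_1,\dots,a_{k-1})^T$, …, $a'_{k+1}=(a_1,\dots,a_k,0)^T$ in block form. Define ${\sf Basis}(B)=(a'_1,\dots,a'_{k+1})$, and let ${\sf Code}(B)\le\mathbb{F}^{n(k+1)}$ be its $\mathbb{F}$-linear span. ${\sf Basis}(B)$ is an ordered basis of ${\sf Code}(B)$. Iteration: ${\sf Code}(B,1)={\sf Code}(B)$ and ${\sf Basis}(B,1)={\sf Basis}(B)$. For $i\ge2$, ${\sf Code}(B,i)={\sf Code}({\sf Basis}(B,i-1))$ and ${\sf Basis}(B,i)={\sf Basis}({\sf Basis}(B,i-1))$. *)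

theory Defs
  imports Complex_Main
begin

text \<open>Vectors of F^n are represented as lists of length n over a field 'a.\<close>

definition vadd :: "'a::field list \<Rightarrow> 'a list \<Rightarrow> 'a list" where
  "vadd x y = map2 (+) x y"

definition smult :: "'a::field \<Rightarrow> 'a list \<Rightarrow> 'a list" where
  "smult c x = map ((*) c) x"

definition vzero :: "nat \<Rightarrow> 'a::field list" where
  "vzero n = replicate n 0"

definition lincomb :: "nat \<Rightarrow> 'a::field list \<Rightarrow> 'a list list \<Rightarrow> 'a list" where
  "lincomb n cs vs = foldr vadd (map2 smult cs vs) (vzero n)"

definition span :: "nat \<Rightarrow> 'a::field list list \<Rightarrow> 'a list set" where
  "span n vs = {lincomb n cs vs | cs. length cs = length vs}"

definition lin_indep :: "nat \<Rightarrow> 'a::field list list \<Rightarrow> bool" where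
  "lin_indep n vs \<longleftrightarrow>
     (\<forall>cs. length cs = length vs \<and> lincomb n cs vs = vzero n \<longrightarrow> (\<forall>c\<in>set cs. c = 0))"

definition vsum :: "nat \<Rightarrow> 'a::field list list \<Rightarrow> 'a list" where
  "vsum n vs = foldr vadd vs (vzero n)"

definition wt :: "'a::zero list \<Rightarrow> nat" where
  "wt x = card {j. j < length x \<and> x ! j \<noteq> 0}"

definition min_dist :: "'a::zero list set \<Rightarrow> nat" where
  "min_dist C = Min {wt x | x. x \<in> C \<and> (\<exists>c\<in>set x. c \<noteq> 0)}"

definition is_ordered_basis :: "nat \<Rightarrow> 'a::field list set \<Rightarrow> 'a list list \<Rightarrow> bool" where
  "is_ordered_basis n C B \<longleftrightarrow>
     (\<forall>b\<in>set B. length b = n) \<and> lin_indep n B \<and> span n B = C"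

definition is_lin_code :: "nat \<Rightarrow> nat \<Rightarrow> nat \<Rightarrow> 'a::field list set \<Rightarrow> bool" where
  "is_lin_code n k d C \<longleftrightarrow>
     (\<exists>B. length B = k \<and> is_ordered_basis n C B) \<and> min_dist C = d"

definition is_bounded :: "nat \<Rightarrow> nat \<Rightarrow> nat \<Rightarrow> 'a::field list list \<Rightarrow> bool" where
  "is_bounded n d u B \<longleftrightarrow>
     (\<forall>a\<in>set B. wt a = u) \<and> wt (vsum n B) = d \<and>
     real u \<ge> real d * (1 + 1 / real (length B))"

text \<open>The construction Basis(B): a_0 = 0, and a'_m has r-th block a_{(r-m) mod (k+1)}.\<close>
definition basis_step :: "'a::field list list \<Rightarrow> 'a list list" where
  "basis_step B =
     (let k = length B;
          a = (\<lambda>j. if j = 0 then vzero (length (hd B)) else B ! (j - 1))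
      in map (\<lambda>m. concat (map (\<lambda>r. a ((r + (k + 1) - m) mod (k + 1))) [1..<k+2])) [1..<k+2])"

definition Basis_it :: "'a::field list list \<Rightarrow> nat \<Rightarrow> 'a list list" where
  "Basis_it B i = (basis_step ^^ i) B"

definition Code_it :: "'a::field list list \<Rightarrow> nat \<Rightarrow> 'a list set" where
  "Code_it B i = span (length (hd (Basis_it B i))) (Basis_it B i)"

end

theory Submission
  imports Defs
begin


definition nz :: "'a::zero list \<Rightarrow> bool" where "nz x \<longleftrightarrow> (\<exists>c\<in>set x. c \<noteq> 0)"

lemma lincomb_Cons: "lincomb n (c#cs) (v#vs) = vadd (smult c v) (lincomb n cs vs)"
  by (simp add: lincomb_def)

lemma lincomb_props:
  assumes "\<forall>v\<in>set vs. length v = n" "length cs = length vs"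
  shows "length (lincomb n cs vs) = n \<and>
    (\<forall>p<n. lincomb n cs vs ! p = (\<Sum>j<length vs. cs!j * vs!j!p))"
  using assms
proof (induction vs arbitrary: cs)
  case Nil
  then show ?case by (simp add: lincomb_def vzero_def)
next
  case (Cons v vs)
  then obtain c cs' where cs: "cs = c # cs'" by (cases cs) auto
  from Cons have IH: "length (lincomb n cs' vs) = n \<and>
    (\<forall>p<n. lincomb n cs' vs ! p = (\<Sum>j<length vs. cs'!j * vs!j!p))" using cs by auto
  have lv: "length v = n" using Cons by auto
  show ?case
    using IH lv by (simp add: cs lincomb_Cons vadd_def smult_def sum.lessThan_Suc_shift del: lessThan_Suc sum.lessThan_Suc)
qed

lemma lincomb_length: "\<forall>v\<in>set vs. length v = n \<Longrightarrow> length cs = length vs \<Longrightarrow> length (lincomb n cs vs) = n"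
  using lincomb_props by blast

lemma lincomb_nth: "\<forall>v\<in>set vs. length v = n \<Longrightarrow> length cs = length vs \<Longrightarrow> p < n \<Longrightarrow>
   lincomb n cs vs ! p = (\<Sum>j<length vs. cs!j * vs!j!p)"
  using lincomb_props by blast

lemma smult1: "smult 1 x = x" by (induct x) (auto simp: smult_def)

lemma vsum_lincomb: "vsum n vs = lincomb n (replicate (length vs) 1) vs"
  by (induction vs) (auto simp: vsum_def lincomb_def smult1)

lemma wt_append: "wt (xs @ ys) = wt xs + wt ys"
proof -
  let ?A = "{j. j < length xs \<and> xs ! j \<noteq> 0}"
  let ?B = "{j. j < length ys \<and> ys ! j \<noteq> 0}"
  have "{j. j < length (xs@ys) \<and> (xs@ys) ! j \<noteq> 0} = ?A \<union> (\<lambda>j. j + length xs) ` ?B"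
  proof (rule set_eqI, rule iffI)
    fix j assume j: "j \<in> {j. j < length (xs@ys) \<and> (xs@ys) ! j \<noteq> 0}"
    show "j \<in> ?A \<union> (\<lambda>j. j + length xs) ` ?B"
    proof (cases "j < length xs")
      case True then show ?thesis using j by (auto simp: nth_append)
    next
      case False
      then have "j - length xs \<in> ?B" using j by (auto simp: nth_append)
      then show ?thesis using False by (intro UnI2 rev_image_eqI[of "j - length xs"]) auto
    qed
  next
    fix j assume "j \<in> ?A \<union> (\<lambda>j. j + length xs) ` ?B"
    then show "j \<in> {j. j < length (xs@ys) \<and> (xs@ys) ! j \<noteq> 0}"
      by (auto simp: nth_append)
  qed
  moreover have "card (?A \<union> (\<lambda>j. j + length xs) ` ?B) = card ?A + card ((\<lambda>j. j + length xs) ` ?B)"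
    by (rule card_Un_disjoint) auto
  moreover have "card ((\<lambda>j. j + length xs) ` ?B) = card ?B"
    by (rule card_image) (auto simp: inj_on_def)
  ultimately show ?thesis unfolding wt_def by simp
qed

lemma wt_concat: "wt (concat xs) = (\<Sum>x\<leftarrow>xs. wt x)"
  by (induction xs) (auto simp: wt_append, simp add: wt_def)

lemma wt_concat_upt: "wt (concat (map f [0..<K])) = (\<Sum>r<K. wt (f r))"
  by (simp add: wt_concat sum_list_sum_nth lessThan_atLeast0)

lemma nz_concat: "nz (concat xs) \<longleftrightarrow> (\<exists>x\<in>set xs. nz x)"
  by (auto simp: nz_def)

lemma wt_pos: "0 < wt x \<longleftrightarrow> nz x"
  by (auto simp: wt_def nz_def in_set_conv_nth card_gt_0_iff)
     (metis nth_mem)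

lemma wt_le: "wt x \<le> length x"
  unfolding wt_def by (rule order_trans[OF card_mono[of "{..<length x}"]]) auto

lemma wt_smult: "c \<noteq> 0 \<Longrightarrow> wt (smult c x) = wt x"
  unfolding wt_def smult_def by (intro arg_cong[where f=card]) auto

lemma not_nz_vzero: "length x = n \<Longrightarrow> \<not> nz x \<longleftrightarrow> x = vzero n"
  apply (rule iffI)
   apply (auto simp: nz_def vzero_def intro!: nth_equalityI)
  done

lemma nth_concat_blocks:
  assumes "\<forall>x\<in>set xs. length x = n" "q < n * length xs"
  shows "concat xs ! q = xs ! (q div n) ! (q mod n)"
  using assms
proof (induction xs arbitrary: q)
  case Nil then show ?case by simp
next
  case (Cons x xs)
  have lx: "length x = n" using Cons by auto
  show ?case
  proof (cases "q < n")
    case True then show ?thesis using lx by (simp add: nth_append)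
  next
    case False
    then have "q - n < n * length xs" using Cons.prems by auto
    then have cc: "concat xs ! (q - n) = xs ! ((q-n) div n) ! ((q-n) mod n)" using Cons by auto
    obtain r where r: "q = n + r" using False by (metis le_add_diff_inverse not_less)
    moreover have "n > 0" using Cons.prems by (cases n) auto
    ultimately have dm: "(q-n) div n = q div n - 1" "(q - n) mod n = q mod n" "q div n \<noteq> 0"
      by auto
    show ?thesis using False lx cc dm
      by (simp add: nth_append nth_Cons')
  qed
qed

lemma length_concat_blocks: "\<forall>x\<in>set xs. length x = n \<Longrightarrow> length (concat xs) = n * length xs"
  by (induction xs) auto



definition aa :: "'a::field list list \<Rightarrow> nat \<Rightarrow> 'a list" where
  "aa B j = (if j = 0 then vzero (length (hd B)) else B ! (j-1))"

definition ds :: "'a list \<Rightarrow> nat \<Rightarrow> nat \<Rightarrow> 'a list" where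
  "ds cs k r = map (\<lambda>j. cs ! ((r+k-j) mod (k+1))) [0..<k]"

lemma bs_length: "length (basis_step B) = length B + 1"
  by (simp add: basis_step_def Let_def del: upt_Suc)

lemma upt_1: "[1..<k+2] = map Suc [0..<k+1]"
  by (simp add: map_Suc_upt)

lemma bs_nth: assumes m: "m < length B + 1" shows "basis_step B ! m =
   concat (map (\<lambda>r. aa B ((r + length B + 1 - m) mod (length B + 1))) [0..<length B + 1])"
proof -
  have e: "[1..<length B + 2] ! m = Suc m" using nth_upt[of 1 m "length B + 2"] m by (simp del: upt_Suc)
  have l: "m < length [1..<length B + 2]" using m by (simp only: length_upt)
  show ?thesis
    unfolding basis_step_def Let_def nth_map[OF l] e
    unfolding upt_1 map_map comp_def
    by (intro arg_cong[where f=concat] map_cong refl) (simp add: aa_def del: upt_Suc)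
qed

lemma gform: fixes j k r :: nat assumes "j < k" "r \<le> k"
  shows "(r+k-j) mod Suc k = (if r \<le> j then r+k-j else r-j-1)"
proof (cases "r \<le> j")
  case True
  then have "r+k-j < Suc k" using assms by linarith
  then show ?thesis using True by simp
next
  case False
  then have "r+k-j = (r-j-1) + Suc k" "r-j-1 < Suc k" using assms by linarith+
  then show ?thesis using False by (metis mod_add_self2 mod_less)
qed

lemma hform: fixes m k r :: nat assumes "m \<le> k" "r \<le> k"
  shows "(Suc (r+k) - m) mod Suc k = (if m \<le> r then r-m else Suc (r+k)-m)"
proof (cases "m \<le> r")
  case True
  then have "Suc (r+k)-m = (r-m) + Suc k" "r-m < Suc k" using assms by linarith+
  then show ?thesis using True by (metis mod_add_self2 mod_less)
next
  case False
  then have "Suc (r+k)-m < Suc k" using assms by linarith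
  then show ?thesis using False by simp
qed

lemma hg: fixes j k r :: nat assumes "j < k" "r \<le> k"
  shows "(Suc (r+k) - (r+k-j) mod Suc k) mod Suc k = Suc j"
proof (cases "r \<le> j")
  case True
  then have g: "(r+k-j) mod Suc k = r+k-j" using gform assms by simp
  have "r+k-j \<le> k" "\<not> r+k-j \<le> r" using assms True by linarith+
  then show ?thesis unfolding g using hform[of "r+k-j" k r] assms by simp
next
  case False
  then have g: "(r+k-j) mod Suc k = r-j-1" using gform assms by simp
  have "r-j-1 \<le> k" "r-j-1 \<le> r" using assms False by linarith+
  then show ?thesis unfolding g using hform[of "r-j-1" k r] assms False by simp
qed

lemma g_bij: fixes r k :: nat assumes r: "r \<le> k"
  shows "bij_betw (\<lambda>j. (r+k-j) mod Suc k) {..<k} ({..<Suc k} - {r})"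
proof (rule bij_betw_byWitness[where f'="\<lambda>m. (Suc (r+k)-m) mod Suc k - 1"])
  show "\<forall>a\<in>{..<k}. (Suc (r + k) - (r + k - a) mod Suc k) mod Suc k - 1 = a"
    using hg r by auto
  show "\<forall>a'\<in>{..<Suc k} - {r}. (r + k - ((Suc (r + k) - a') mod Suc k - 1)) mod Suc k = a'"
  proof
    fix a' assume a': "a' \<in> {..<Suc k} - {r}"
    then have a'k: "a' \<le> k" "a' \<noteq> r" by auto
    show "(r + k - ((Suc (r + k) - a') mod Suc k - 1)) mod Suc k = a'"
    proof (cases "a' \<le> r")
      case True
      then have h: "(Suc (r+k)-a') mod Suc k - 1 = r - a' - 1" using hform[of a' k r] a'k r by simp
      have "r - a' - 1 < k" "\<not> r \<le> r - a' - 1" using True a'k r by linarith+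
      then show ?thesis unfolding h using gform[of "r-a'-1" k r] r True a'k by simp
    next
      case False
      then have h: "(Suc (r+k)-a') mod Suc k - 1 = r + k - a'" using hform[of a' k r] a'k r by simp
      have "r + k - a' < k" "r \<le> r + k - a'" using False a'k r by linarith+
      then show ?thesis unfolding h using gform[of "r+k-a'" k r] r False a'k by simp
    qed
  qed
  show "(\<lambda>j. (r + k - j) mod Suc k) ` {..<k} \<subseteq> {..<Suc k} - {r}"
  proof
    fix x assume "x \<in> (\<lambda>j. (r + k - j) mod Suc k) ` {..<k}"
    then obtain j where j: "j < k" "x = (r + k - j) mod Suc k" by auto
    then show "x \<in> {..<Suc k} - {r}" using gform[of j k r] r by (auto split: if_splits)
  qed
  show "(\<lambda>m. (Suc (r+k)-m) mod Suc k - 1) ` ({..<Suc k} - {r}) \<subseteq> {..<k}"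
  proof
    fix x assume "x \<in> (\<lambda>m. (Suc (r+k)-m) mod Suc k - 1) ` ({..<Suc k} - {r})"
    then obtain a' where a'0: "a' \<in> {..<Suc k} - {r}" "x = (Suc (r+k)-a') mod Suc k - 1" by blast
    then have a': "a' \<le> k" "a' \<noteq> r" "x = (Suc (r+k)-a') mod Suc k - 1" by auto
    then show "x \<in> {..<k}" using hform[of a' k r] r by (auto split: if_splits)
  qed
qed



lemma sum_if_nat: "(m::nat) < K \<Longrightarrow> (\<Sum>r<K. if r = m then 0 else (e::nat)) = (K-1)*e"
proof -
  assume m: "m < K"
  have "(\<Sum>r<K. if r = m then 0 else e) = (if m = m then 0 else e) + (\<Sum>r\<in>{..<K}-{m}. if r = m then 0 else e)"
    using m by (intro sum.remove) auto
  also have "\<dots> = (\<Sum>r\<in>{..<K}-{m}. e)" by simp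
  also have "\<dots> = (K-1)*e" using m by simp
  finally show ?thesis .
qed

lemma lincomb_single:
  assumes "\<forall>v\<in>set vs. length v = N" "length cs = length vs" "m < length vs"
    "\<forall>i<length vs. i \<noteq> m \<longrightarrow> cs!i = 0"
  shows "lincomb N cs vs = smult (cs!m) (vs!m)"
proof (rule nth_equalityI)
  have lm: "length (vs!m) = N" using assms by auto
  show "length (lincomb N cs vs) = length (smult (cs!m) (vs!m))"
    using lincomb_length[OF assms(1,2)] lm by (simp add: smult_def)
  fix p assume "p < length (lincomb N cs vs)"
  then have p: "p < N" using lincomb_length[OF assms(1,2)] by simp
  have "lincomb N cs vs ! p = (\<Sum>j<length vs. cs!j * vs!j!p)" using lincomb_nth[OF assms(1,2) p] .
  also have "\<dots> = cs!m * vs!m!p + (\<Sum>j\<in>{..<length vs}-{m}. cs!j * vs!j!p)"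
    using assms(3) by (intro sum.remove) auto
  also have "\<dots> = cs!m * vs!m!p" using assms(4) by (simp add: sum.neutral)
  finally show "lincomb N cs vs ! p = smult (cs!m) (vs!m) ! p" using p lm by (simp add: smult_def)
qed

lemma lincomb_zero_coeffs:
  assumes "\<forall>v\<in>set vs. length v = N" "length cs = length vs" "\<forall>j<length vs. cs!j = 0"
  shows "\<not> nz (lincomb N cs vs)"
  using lincomb_nth[OF assms(1,2)] lincomb_length[OF assms(1,2)] assms(3)
  by (auto simp: nz_def in_set_conv_nth)

lemma lincomb_nz_iff:
  assumes "\<forall>v\<in>set vs. length v = N" "length cs = length vs" "lin_indep N vs"
  shows "nz (lincomb N cs vs) \<longleftrightarrow> (\<exists>j<length vs. cs!j \<noteq> 0)"
proof
  assume "nz (lincomb N cs vs)"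
  then show "\<exists>j<length vs. cs!j \<noteq> 0" using lincomb_zero_coeffs[OF assms(1,2)] by blast
next
  assume "\<exists>j<length vs. cs!j \<noteq> 0"
  then obtain j where j: "j < length vs" "cs!j \<noteq> 0" by blast
  show "nz (lincomb N cs vs)"
  proof (rule ccontr)
    assume "\<not> nz (lincomb N cs vs)"
    then have "lincomb N cs vs = vzero N" using not_nz_vzero lincomb_length[OF assms(1,2)] by blast
    then have "\<forall>c\<in>set cs. c = 0" using assms(2,3) unfolding lin_indep_def by blast
    then show False using j assms(2) by (metis nth_mem)
  qed
qed

lemma span_iff: "x \<in> span N vs \<longleftrightarrow> (\<exists>cs. length cs = length vs \<and> x = lincomb N cs vs)"
  by (auto simp: span_def)

lemma md_facts:
  assumes "\<forall>v\<in>set vs. length v = N" "lin_indep N vs" "length vs \<ge> 1"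
  shows "vsum N vs \<in> span N vs" "nz (vsum N vs)"
    "\<And>x. x \<in> span N vs \<Longrightarrow> nz x \<Longrightarrow> min_dist (span N vs) \<le> wt x"
    "\<And>e. (\<forall>x\<in>span N vs. nz x \<longrightarrow> e \<le> wt x) \<Longrightarrow> e \<le> min_dist (span N vs)"
proof -
  show vs: "vsum N vs \<in> span N vs" unfolding vsum_lincomb span_iff
    by (rule exI[of _ "replicate (length vs) 1"]) simp
  show vnz: "nz (vsum N vs)" unfolding vsum_lincomb
    using lincomb_nz_iff[OF assms(1) _ assms(2), of "replicate (length vs) 1"] assms(3) by force
  let ?W = "{wt x | x. x \<in> span N vs \<and> (\<exists>c\<in>set x. c \<noteq> 0)}"
  have fin: "finite ?W"
  proof (rule finite_subset[of _ "{..N}"])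
    show "?W \<subseteq> {..N}"
    proof
      fix w assume "w \<in> ?W"
      then obtain x where x: "w = wt x" "x \<in> span N vs" by blast
      then obtain cs where "length cs = length vs" "x = lincomb N cs vs" unfolding span_iff by blast
      then have "length x = N" using lincomb_length[OF assms(1)] by simp
      then show "w \<in> {..N}" using wt_le[of x] x by auto
    qed
  qed simp
  have ne: "?W \<noteq> {}" using vs vnz unfolding nz_def by blast
  show "\<And>x. x \<in> span N vs \<Longrightarrow> nz x \<Longrightarrow> min_dist (span N vs) \<le> wt x"
    unfolding min_dist_def nz_def by (rule Min_le[OF fin]) blast
  show "\<And>e. (\<forall>x\<in>span N vs. nz x \<longrightarrow> e \<le> wt x) \<Longrightarrow> e \<le> min_dist (span N vs)"
    unfolding min_dist_def using fin ne by (auto simp: nz_def Min_ge_iff)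
qed



locale stp =
  fixes B :: "'a::field list list" and n k :: nat
  assumes lenB: "length B = k" and k1: "k \<ge> 1" and lens: "\<forall>b\<in>set B. length b = n"
    and li: "lin_indep n B"
begin

lemma hdB: "length (hd B) = n"
  using lens lenB k1 by (cases B) auto

lemma aa_len: "j \<le> k \<Longrightarrow> length (aa B j) = n"
  using lens lenB hdB by (auto simp: aa_def vzero_def)

lemma aa0: "p < n \<Longrightarrow> aa B 0 ! p = 0"
  using hdB by (simp add: aa_def vzero_def)

lemma aa_Suc: "aa B (Suc j) = B ! j"
  by (simp add: aa_def)

lemma bs_len': "length (basis_step B) = Suc k"
  using bs_length[of B] lenB by simp

lemma bs_nth': "m < Suc k \<Longrightarrow> basis_step B ! m =
   concat (map (\<lambda>r. aa B ((Suc (r+k) - m) mod Suc k)) [0..<Suc k])"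
  using bs_nth[of m B] lenB by simp

lemma blocks_len: "\<forall>x\<in>set (map (\<lambda>r. aa B ((Suc (r+k) - m) mod Suc k)) [0..<Suc k]). length x = n"
  using aa_len by auto

lemma bs_elem_len: "\<forall>b\<in>set (basis_step B). length b = n * Suc k"
proof
  fix b assume "b \<in> set (basis_step B)"
  then obtain m where m: "m < Suc k" "b = basis_step B ! m" using bs_len' by (auto simp: in_set_conv_nth)
  show "length b = n * Suc k" unfolding m(2) bs_nth'[OF m(1)]
    using length_concat_blocks[OF blocks_len] by simp
qed

lemma bs_nn: "m < Suc k \<Longrightarrow> q < n * Suc k \<Longrightarrow>
  basis_step B ! m ! q = aa B ((Suc (q div n + k) - m) mod Suc k) ! (q mod n)"
proof -
  assume m: "m < Suc k" and q: "q < n * Suc k"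
  then have n0: "n > 0" by (cases n) auto
  have qd: "q div n < Suc k" using q n0 by (simp add: div_less_iff_less_mult mult.commute)
  show ?thesis unfolding bs_nth'[OF m] using nth_concat_blocks[OF blocks_len, of q m] q qd
    by (simp del: upt_Suc)
qed

lemma reindex:
  assumes r: "r \<le> k" and p: "p < n"
  shows "(\<Sum>m<Suc k. cs!m * aa B ((Suc (r+k) - m) mod Suc k) ! p) =
         (\<Sum>j<k. cs!((r+k-j) mod Suc k) * B!j!p)"
proof -
  let ?f = "\<lambda>m. cs!m * aa B ((Suc (r+k) - m) mod Suc k) ! p"
  have "(\<Sum>m<Suc k. ?f m) = ?f r + (\<Sum>m\<in>{..<Suc k}-{r}. ?f m)"
    using r by (intro sum.remove) auto
  also have "?f r = 0" using aa0[OF p] by simp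
  also have "(\<Sum>m\<in>{..<Suc k}-{r}. ?f m) = (\<Sum>j<k. ?f ((r+k-j) mod Suc k))"
    by (rule sum.reindex_bij_betw[OF g_bij[OF r], symmetric])
  also have "\<dots> = (\<Sum>j<k. cs!((r+k-j) mod Suc k) * B!j!p)"
    by (intro sum.cong refl) (simp add: hg[OF _ r] aa_Suc)
  finally show ?thesis by simp
qed

lemma ds_len: "length (ds cs k r) = k" by (simp add: ds_def)
lemma ds_lenB: "length (ds cs k r) = length B" using lenB by (simp add: ds_def)
lemma ds_nth: "j < k \<Longrightarrow> ds cs k r ! j = cs!((r+k-j) mod Suc k)" by (simp add: ds_def)

lemma lincomb_bs:
  assumes cs: "length cs = Suc k"
  shows "lincomb (n * Suc k) cs (basis_step B) = concat (map (\<lambda>r. lincomb n (ds cs k r) B) [0..<Suc k])"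
proof -
  have bl: "\<forall>x\<in>set (map (\<lambda>r. lincomb n (ds cs k r) B) [0..<Suc k]). length x = n"
    using lincomb_length[OF lens] lenB ds_len by auto
  have cs': "length cs = length (basis_step B)" using cs bs_len' by simp
  show ?thesis
  proof (rule nth_equalityI)
    show "length (lincomb (n * Suc k) cs (basis_step B)) = length (concat (map (\<lambda>r. lincomb n (ds cs k r) B) [0..<Suc k]))"
      using lincomb_length[OF bs_elem_len cs'] length_concat_blocks[OF bl] by simp
    fix q assume "q < length (lincomb (n * Suc k) cs (basis_step B))"
    then have q: "q < n * Suc k" using lincomb_length[OF bs_elem_len cs'] by simp
    then have n0: "n > 0" by (cases n) auto
    have qd: "q div n < Suc k" using q n0 by (simp add: div_less_iff_less_mult mult.commute)
    have qm: "q mod n < n" using n0 by simp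
    have "lincomb (n * Suc k) cs (basis_step B) ! q = (\<Sum>m<Suc k. cs!m * basis_step B ! m ! q)"
      using lincomb_nth[OF bs_elem_len cs' q] bs_len' by simp
    also have "\<dots> = (\<Sum>m<Suc k. cs!m * aa B ((Suc (q div n + k) - m) mod Suc k) ! (q mod n))"
      using bs_nn q by simp
    also have "\<dots> = (\<Sum>j<k. cs!((q div n+k-j) mod Suc k) * B!j!(q mod n))"
      using reindex[of "q div n" "q mod n" cs] qd qm by simp
    also have "\<dots> = lincomb n (ds cs k (q div n)) B ! (q mod n)"
      using lincomb_nth[OF lens ds_lenB qm] lenB by (simp add: ds_nth)
    also have "\<dots> = concat (map (\<lambda>r. lincomb n (ds cs k r) B) [0..<Suc k]) ! q"
      using nth_concat_blocks[OF bl, of q] q qd by (simp del: upt_Suc)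
    finally show "lincomb (n * Suc k) cs (basis_step B) ! q = concat (map (\<lambda>r. lincomb n (ds cs k r) B) [0..<Suc k]) ! q" .
  qed
qed

lemma blk_nz_iff:
  assumes r: "r \<le> k" and cs: "length cs = Suc k"
  shows "nz (lincomb n (ds cs k r) B) \<longleftrightarrow> (\<exists>m<Suc k. m \<noteq> r \<and> cs!m \<noteq> 0)"
proof -
  have "nz (lincomb n (ds cs k r) B) \<longleftrightarrow> (\<exists>j<k. ds cs k r ! j \<noteq> 0)"
    using lincomb_nz_iff[OF lens ds_lenB li] lenB by simp
  also have "\<dots> \<longleftrightarrow> (\<exists>j<k. cs ! ((r+k-j) mod Suc k) \<noteq> 0)" by (auto simp: ds_nth)
  also have "\<dots> \<longleftrightarrow> (\<exists>m\<in>(\<lambda>j. (r+k-j) mod Suc k) ` {..<k}. cs!m \<noteq> 0)" by auto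
  also have "(\<lambda>j. (r+k-j) mod Suc k) ` {..<k} = {..<Suc k} - {r}"
    using bij_betw_imp_surj_on[OF g_bij[OF r]] .
  finally show ?thesis by auto
qed

end



declare upt_Suc[simp del]

context stp begin

lemma bs_lin_indep: "lin_indep (n * Suc k) (basis_step B)"
  unfolding lin_indep_def
proof (intro allI impI)
  fix cs assume h: "length cs = length (basis_step B) \<and> lincomb (n * Suc k) cs (basis_step B) = vzero (n * Suc k)"
  then have cs: "length cs = Suc k" using bs_len' by simp
  show "\<forall>c\<in>set cs. c = 0"
  proof (rule ccontr)
    assume "\<not> (\<forall>c\<in>set cs. c = 0)"
    then obtain m where m: "m < Suc k" "cs!m \<noteq> 0" using cs by (auto simp: in_set_conv_nth)
    define r where "r = (if m = 0 then 1 else 0::nat)"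
    have r: "r \<le> k" "r \<noteq> m" using k1 by (auto simp: r_def)
    have "nz (lincomb n (ds cs k r) B)" using blk_nz_iff[OF r(1) cs] m r by auto
    moreover have "lincomb n (ds cs k r) B \<in> set (map (\<lambda>r. lincomb n (ds cs k r) B) [0..<Suc k])"
      using r by auto
    ultimately have "nz (lincomb (n * Suc k) cs (basis_step B))"
      unfolding lincomb_bs[OF cs] nz_concat by blast
    moreover have "\<not> nz (vzero (n * Suc k))" by (simp add: nz_def vzero_def)
    ultimately show False using h by metis
  qed
qed

lemma ds_ones: "ds (replicate (Suc k) 1) k r = replicate k 1"
  by (rule nth_equalityI) (auto simp: ds_len ds_nth simp del: replicate_Suc)

lemma bs_vsum_wt: "wt (vsum (n * Suc k) (basis_step B)) = Suc k * wt (vsum n B)"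
proof -
  have "vsum (n * Suc k) (basis_step B) = concat (map (\<lambda>r. vsum n B) [0..<Suc k])"
    unfolding vsum_lincomb bs_len' lincomb_bs[OF length_replicate] ds_ones
    using lenB by simp
  then show ?thesis by (simp add: wt_concat_upt del: upt_Suc)
qed

lemma wt_vzero: "wt (vzero N) = 0" by (simp add: wt_def vzero_def)

lemma bs_wt:
  assumes u: "\<forall>b\<in>set B. wt b = u"
  shows "\<forall>b\<in>set (basis_step B). wt b = k * u"
proof
  fix b assume "b \<in> set (basis_step B)"
  then obtain m where m: "m < Suc k" "b = basis_step B ! m" using bs_len' by (auto simp: in_set_conv_nth)
  have each: "wt (aa B ((Suc (r+k) - m) mod Suc k)) = (if r = m then 0 else u)" if r: "r < Suc k" for r
  proof -
    have hf: "(Suc (r+k) - m) mod Suc k = (if m \<le> r then r-m else Suc (r+k)-m)"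
      using hform[of m k r] m r by simp
    show ?thesis
    proof (cases "r = m")
      case True then show ?thesis using hf hdB by (simp add: aa_def wt_vzero)
    next
      case False
      have "\<exists>j. (Suc (r+k) - m) mod Suc k = Suc j \<and> j < k"
      proof (cases "m \<le> r")
        case True
        then show ?thesis using hf False m r by (intro exI[of _ "r - m - 1"]) auto
      next
        case False
        then show ?thesis using hf m r by (intro exI[of _ "r + k - m"]) auto
      qed
      then obtain j where j: "(Suc (r+k) - m) mod Suc k = Suc j" "j < k" by blast
      then have "B ! j \<in> set B" using lenB by simp
      then show ?thesis using j False u by (simp add: aa_Suc)
    qed
  qed
  have "wt b = (\<Sum>r<Suc k. wt (aa B ((Suc (r+k) - m) mod Suc k)))"
    unfolding m(2) bs_nth'[OF m(1)] wt_concat_upt ..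
  also have "\<dots> = (\<Sum>r<Suc k. if r = m then 0 else u)" using each by (intro sum.cong) auto
  also have "\<dots> = k * u" using sum_if_nat[OF m(1)] by simp
  finally show "wt b = k * u" .
qed

lemma step_lb:
  assumes e: "\<forall>x\<in>span n B. nz x \<longrightarrow> e \<le> wt x"
    and x: "x \<in> span (n * Suc k) (basis_step B)" "nz x"
  shows "k * e \<le> wt x" "(\<forall>b\<in>set B. wt b = u) \<Longrightarrow> min (Suc k * e) (k * u) \<le> wt x"
proof -
  obtain cs where cs0: "length cs = length (basis_step B)" "x = lincomb (n * Suc k) cs (basis_step B)"
    using x(1) unfolding span_iff by blast
  have cs: "length cs = Suc k" using cs0 bs_len' by simp
  have xc: "x = concat (map (\<lambda>r. lincomb n (ds cs k r) B) [0..<Suc k])" using cs0 lincomb_bs[OF cs] by simp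
  have wx: "wt x = (\<Sum>r<Suc k. wt (lincomb n (ds cs k r) B))" unfolding xc wt_concat_upt ..
  obtain r where r: "r < Suc k" "nz (lincomb n (ds cs k r) B)" using x(2) unfolding xc nz_concat by auto
  then obtain m where m: "m < Suc k" "cs!m \<noteq> 0" using blk_nz_iff[of r cs] cs by auto
  have inspan: "lincomb n (ds cs k r) B \<in> span n B" for r unfolding span_iff using ds_lenB by blast
  have blk_ge: "e \<le> wt (lincomb n (ds cs k r) B)" if "r < Suc k" "\<exists>m'<Suc k. m' \<noteq> r \<and> cs!m' \<noteq> 0" for r
    using e inspan blk_nz_iff[of r cs] cs that by auto
  have "(\<Sum>r<Suc k. if r = m then 0 else e) \<le> (\<Sum>r<Suc k. wt (lincomb n (ds cs k r) B))"
    by (intro sum_mono) (use blk_ge m in auto)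
  then show "k * e \<le> wt x" using sum_if_nat[OF m(1), of e] wx by simp
  assume u: "\<forall>b\<in>set B. wt b = u"
  show "min (Suc k * e) (k * u) \<le> wt x"
  proof (cases "\<exists>m2<Suc k. m2 \<noteq> m \<and> cs!m2 \<noteq> 0")
    case True
    then have "(\<Sum>r<Suc k. e) \<le> (\<Sum>r<Suc k. wt (lincomb n (ds cs k r) B))"
      by (intro sum_mono) (use blk_ge m in auto)
    then show ?thesis using wx by simp
  next
    case False
    then have "x = smult (cs!m) (basis_step B ! m)"
      unfolding cs0(2) using lincomb_single[OF bs_elem_len cs0(1)] m cs bs_len' by auto
    then have "wt x = wt (basis_step B ! m)" using wt_smult m by simp
    also have "\<dots> = k * u" using bs_wt[OF u] m bs_len' by simp
    finally show ?thesis by simp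
  qed
qed

end



lemma real_cond: "K > 0 \<Longrightarrow> (real a * (1 + real b / real K) \<le> real c) \<longleftrightarrow> a * (K + b) \<le> c * (K::nat)"
proof -
  assume K: "K > 0"
  have "real a * (1 + real b / real K) = real (a * (K + b)) / real K" using K by (simp add: field_simps)
  then have "(real a * (1 + real b / real K) \<le> real c) \<longleftrightarrow> real (a * (K + b)) \<le> real c * real K"
    using K by (simp add: divide_le_eq)
  also have "\<dots> \<longleftrightarrow> a * (K + b) \<le> c * K" by (metis of_nat_le_iff of_nat_mult)
  finally show ?thesis .
qed

lemma P_Suc: "(\<Prod>j=1..Suc t. (k::nat) + j) = (\<Prod>j=1..t. k + j) * Suc (k + t)"
  by (simp add: prod.cl_ivl_Suc)

lemma Q_Suc: "(\<Prod>j=1..Suc t. (k::nat) + j - 1) = (\<Prod>j=1..t. k + j - 1) * (k + t)"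
  by (simp add: prod.cl_ivl_Suc)

lemma QP: "(k + t) * (\<Prod>j=1..t. (k::nat) + j - 1) = k * (\<Prod>j=1..t. k + j)"
proof (induction t)
  case 0 then show ?case by simp
next
  case (Suc t)
  have "(k + Suc t) * (\<Prod>j=1..Suc t. k + j - 1) = Suc (k + t) * ((k + t) * (\<Prod>j=1..t. k + j - 1))"
    unfolding Q_Suc by simp
  also have "\<dots> = Suc (k+t) * (k * (\<Prod>j=1..t. k + j))" using Suc by simp
  also have "\<dots> = k * (\<Prod>j=1..Suc t. k + j)" unfolding P_Suc by (simp only: mult.commute mult.left_commute)
  finally show ?case .
qed

lemma P_pos: "(\<Prod>j=1..t. (k::nat) + j) > 0"
  by (induction t) (auto simp: P_Suc)

lemma Basis_it_Suc: "Basis_it B (Suc t) = basis_step (Basis_it B t)"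
  by (simp add: Basis_it_def)

lemma iter_basic:
  assumes "stp B n k"
  shows "length (Basis_it B t) = k + t \<and> (\<forall>b\<in>set (Basis_it B t). length b = n * (\<Prod>j=1..t. k + j))
    \<and> lin_indep (n * (\<Prod>j=1..t. k + j)) (Basis_it B t)"
proof (induction t)
  case 0 then show ?case using assms by (simp add: Basis_it_def stp_def)
next
  case (Suc t)
  have s: "stp (Basis_it B t) (n * (\<Prod>j=1..t. k + j)) (k + t)"
    using Suc assms by (simp add: stp_def)
  show ?case unfolding Basis_it_Suc P_Suc
    using stp.bs_len'[OF s] stp.bs_elem_len[OF s] stp.bs_lin_indep[OF s]
    by (simp add: mult.assoc del: mult_Suc_right)
qed



lemma NSuc: "n * (\<Prod>j=1..Suc t. (k::nat) + j) = n * (\<Prod>j=1..t. k + j) * Suc (k + t)"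
  by (simp only: P_Suc mult.assoc)

lemma iter_stp: "stp B n k \<Longrightarrow> stp (Basis_it B t) (n * (\<Prod>j=1..t. k + j)) (k + t)"
  using iter_basic[of B n k t] by (simp add: stp_def)

lemma iter_vsum: assumes "stp B n k"
  shows "wt (vsum (n * (\<Prod>j=1..t. k + j)) (Basis_it B t)) = (\<Prod>j=1..t. k + j) * wt (vsum n B)"
proof (induction t)
  case 0 then show ?case by (simp add: Basis_it_def)
next
  case (Suc t)
  show ?case unfolding Basis_it_Suc NSuc
    using stp.bs_vsum_wt[OF iter_stp[OF assms, of t]] Suc by (simp add: P_Suc algebra_simps)
qed

lemma iter_wt: assumes "stp B n k" "\<forall>b\<in>set B. wt b = u"
  shows "\<forall>b\<in>set (Basis_it B t). wt b = u * (\<Prod>j=1..t. k + j - 1)"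
proof (induction t)
  case 0 then show ?case using assms by (simp add: Basis_it_def)
next
  case (Suc t)
  show ?case unfolding Basis_it_Suc Q_Suc
    using stp.bs_wt[OF iter_stp[OF assms(1), of t] Suc] by (simp add: ac_simps)
qed

lemma iter_lb: assumes "stp B n k" "\<forall>x\<in>span n B. nz x \<longrightarrow> d \<le> wt x"
  shows "\<forall>x\<in>span (n * (\<Prod>j=1..t. k + j)) (Basis_it B t). nz x \<longrightarrow> d * (\<Prod>j=1..t. k + j - 1) \<le> wt x"
proof (induction t)
  case 0 then show ?case using assms by (simp add: Basis_it_def)
next
  case (Suc t)
  show ?case unfolding Basis_it_Suc Q_Suc NSuc
    using stp.step_lb(1)[OF iter_stp[OF assms(1), of t] Suc] by (simp add: ac_simps)
qed

lemma iter_lb2: assumes "stp B n k" "\<forall>x\<in>span n B. nz x \<longrightarrow> d \<le> wt x" "\<forall>b\<in>set B. wt b = u"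
    "d * (k + i) \<le> u * k"
  shows "t \<le> i \<Longrightarrow> \<forall>x\<in>span (n * (\<Prod>j=1..t. k + j)) (Basis_it B t). nz x \<longrightarrow> d * (\<Prod>j=1..t. k + j) \<le> wt x"
proof (induction t)
  case 0 then show ?case using assms by (simp add: Basis_it_def)
next
  case (Suc t)
  let ?P = "\<Prod>j=1..t. k + j" and ?Q = "\<Prod>j=1..t. k + j - 1"
  have IH: "\<forall>x\<in>span (n * ?P) (Basis_it B t). nz x \<longrightarrow> d * ?P \<le> wt x" using Suc by simp
  have wts: "\<forall>b\<in>set (Basis_it B t). wt b = u * ?Q" using iter_wt[OF assms(1,3)] .
  have "Suc (k + t) * (d * ?P) \<le> (k + t) * (u * ?Q)"
  proof -
    have "Suc (k + t) * (d * ?P) = (d * Suc (k + t)) * ?P" by (simp only: ac_simps)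
    also have "\<dots> \<le> (d * (k + i)) * ?P" using Suc.prems by (intro mult_right_mono mult_left_mono) auto
    also have "\<dots> \<le> (u * k) * ?P" using assms(4) by (intro mult_right_mono) auto
    also have "\<dots> = u * ((k + t) * ?Q)" unfolding QP by simp
    finally show ?thesis by (simp add: ac_simps)
  qed
  then have "\<forall>x\<in>span (n * ?P * Suc (k + t)) (basis_step (Basis_it B t)). nz x \<longrightarrow> Suc (k + t) * (d * ?P) \<le> wt x"
    using stp.step_lb(2)[OF iter_stp[OF assms(1), of t] IH _ _ wts] by fastforce
  then show ?case unfolding Basis_it_Suc NSuc P_Suc by (simp add: algebra_simps)
qed



theorem proposition3p5:
  fixes B :: "'a::field list list" and C :: "'a list set" and n k d i :: nat
  assumes "i \<ge> 1" and "k \<ge> 1"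
    and "is_lin_code n k d C"
    and "is_ordered_basis n C B" and "length B = k"
  shows "is_lin_code (n * (\<Prod>j=1..i. k + j)) (k + i) (min_dist (Code_it B i)) (Code_it B i)
         \<and> min_dist (Code_it B i) \<ge> d * (\<Prod>j=1..i. k + j - 1)
         \<and> (\<forall>u::nat. u \<ge> 1 \<and> is_bounded n d u B \<and> real u \<ge> real d * (1 + real i / real k)
               \<longrightarrow> min_dist (Code_it B i) = d * (\<Prod>j=1..i. k + j)
                 \<and> (is_bounded (n * (\<Prod>j=1..i. k + j)) (min_dist (Code_it B i))
                        (u * (\<Prod>j=1..i. k + j - 1)) (Basis_it B i)
                    \<longleftrightarrow> real u \<ge> real d * (1 + real (i + 1) / real k)))"
proof -
  have lens: "\<forall>b\<in>set B. length b = n" and li: "lin_indep n B" and spC: "span n B = C"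
    using assms(4) by (auto simp: is_ordered_basis_def)
  have mdC: "min_dist C = d" using assms(3) by (simp add: is_lin_code_def)
  have s: "stp B n k" using lens li assms(2,5) by (simp add: stp_def)
  define P where "P = (\<Prod>j=1..i. k + j)"
  define Q where "Q = (\<Prod>j=1..i. k + j - 1)"
  define Bi where "Bi = Basis_it B i"
  have bi: "length Bi = k + i" "\<forall>b\<in>set Bi. length b = n * P" "lin_indep (n * P) Bi"
    using iter_basic[OF s, of i] unfolding Bi_def P_def by auto
  have si: "stp Bi (n * P) (k + i)" using iter_stp[OF s, of i] unfolding Bi_def P_def .
  have code: "Code_it B i = span (n * P) Bi"
    unfolding Code_it_def Bi_def[symmetric] stp.hdB[OF si] ..
  have l1: "length Bi \<ge> 1" using bi(1) assms(2) by simp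
  note mf = md_facts[OF bi(2) bi(3) l1]
  have lB: "length B \<ge> 1" using assms(2,5) by simp
  have base: "\<forall>x\<in>span n B. nz x \<longrightarrow> d \<le> wt x"
    using md_facts(3)[OF lens li lB] spC mdC by auto
  have part1: "is_lin_code (n * P) (k + i) (min_dist (Code_it B i)) (Code_it B i)"
    unfolding is_lin_code_def is_ordered_basis_def code using bi by blast
  have part2: "min_dist (Code_it B i) \<ge> d * Q"
    unfolding code Q_def by (rule mf(4)) (use iter_lb[OF s base, of i] in \<open>simp add: Bi_def P_def\<close>)
  have part3: "min_dist (Code_it B i) = d * P
                 \<and> (is_bounded (n * P) (min_dist (Code_it B i)) (u * Q) Bi
                    \<longleftrightarrow> real u \<ge> real d * (1 + real (i + 1) / real k))"
    if u: "u \<ge> 1" "is_bounded n d u B" "real u \<ge> real d * (1 + real i / real k)" for u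
  proof -
    have wu: "\<forall>b\<in>set B. wt b = u" and vs: "wt (vsum n B) = d" using u(2) by (auto simp: is_bounded_def)
    have k0: "k > 0" using assms(2) by simp
    have c: "d * (k + i) \<le> u * k" using u(3) real_cond[OF k0] by blast
    have vsi: "wt (vsum (n * P) Bi) = P * d" using iter_vsum[OF s, of i] vs unfolding Bi_def P_def by simp
    have ge: "d * P \<le> min_dist (Code_it B i)"
      unfolding code by (rule mf(4)) (use iter_lb2[OF s base wu c, of i] in \<open>simp add: Bi_def P_def\<close>)
    have le: "min_dist (Code_it B i) \<le> d * P" unfolding code using mf(3)[OF mf(1) mf(2)] vsi by (simp add: mult.commute)
    have D: "min_dist (Code_it B i) = d * P" using ge le by simp
    have wi: "\<forall>b\<in>set Bi. wt b = u * Q" using iter_wt[OF s wu, of i] unfolding Bi_def Q_def .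
    have ki: "k + i > 0" using k0 by simp
    have Ppos: "P > 0" unfolding P_def by (rule P_pos)
    have "is_bounded (n * P) (min_dist (Code_it B i)) (u * Q) Bi
          \<longleftrightarrow> real (u * Q) \<ge> real (d * P) * (1 + 1 / real (k + i))"
      unfolding is_bounded_def D using wi vsi bi(1) by (simp add: ac_simps)
    also have "\<dots> \<longleftrightarrow> (d * P) * (k + i + 1) \<le> (u * Q) * (k + i)"
      using real_cond[OF ki, of "d * P" 1 "u * Q"] by (simp add: ac_simps)
    also have "(u * Q) * (k + i) = (u * k) * P" unfolding Q_def P_def using QP[of k i] by (simp add: ac_simps)
    also have "(d * P) * (k + i + 1) \<le> (u * k) * P \<longleftrightarrow> d * (k + (i + 1)) \<le> u * k"
    proof -
      have e1: "(d * P) * (k + i + 1) = P * (d * (k + (i + 1)))" by (simp only: ac_simps)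
      have e2: "(u * k) * P = P * (u * k)" by (simp only: ac_simps)
      show ?thesis unfolding e1 e2 using Ppos by (simp only: mult_le_cancel1) simp
    qed
    also have "\<dots> \<longleftrightarrow> real u \<ge> real d * (1 + real (i + 1) / real k)"
      using real_cond[OF k0, of d "i+1" u] by simp
    finally show ?thesis using D by simp
  qed
  show ?thesis using part1 part2 part3 unfolding P_def Q_def Bi_def by blast
qed


end
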